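(* Let $N\ge1$, $d_1,d_2,d_3,d_4\ge1$, $\kappa_1,\kappa_2\ge0$, and let $\{(U_i,V_i)\}_{i=1}^N$, $U_i(t)\in\mathbb C^{d_1\times d_2}$, $V_i(t)\in\mathbb C^{d_3\times d_4}$, be a solution of $\dot U_j=\frac{\kappa_1}{N}\sum_k(\langle V_j,V_k\rangle_FU_kU_j^\dagger U_j-\langle V_k,V_j\rangle_FU_jU_k^\dagger U_j)+\frac{\kappa_2}{N}\sum_k(\langle V_j,V_k\rangle_FU_jU_j^\dagger U_k-\langle V_k,V_j\rangle_FU_jU_k^\dagger U_j)$, $\dot V_j=\frac{\kappa_1}{N}\sum_k(\langle U_j,U_k\rangle_FV_kV_j^\dagger V_j-\langle U_k,U_j\rangle_FV_jV_k^\dagger V_j)+\frac{\kappa_2}{N}\sum_k(\langle U_j,U_k\rangle_FV_jV_j^\dagger V_k-\langle U_k,U_j\rangle_FV_jV_k^\dagger V_j)$. Then $\mathcal E(U,V):=1-\frac1{N^2}\sum_{i,j=1}^N\langle U_i,U_j\rangle_F\langle V_i,V_j\rangle_F$ satisfies $$\frac{d}{dt}\mathcal E=-\frac{\kappa_1}{N}\sum_{j=1}^N\Big\|\frac1N\sum_{i=1}^N\big(\langle V_j,V_i\rangle_FU_iU_j^\dagger-\langle V_i,V_j\rangle_FU_jU_i^\dagger\big)\Big\|_F^2-\frac{\kappa_1}{N}\sum_{j=1}^N\Big\|\frac1N\sum_{i=1}^N\big(\langle U_j,U_i\rangle_FV_iV_j^\dagger-\langle U_i,U_j\rangle_FV_jV_i^\dagger\big)\Big\|_F^2$$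 $$-\frac{\kappa_2}{N}\sum_{j=1}^N\Big\|\frac1N\sum_{i=1}^N\big(\langle V_j,V_i\rangle_FU_j^\dagger U_i-\langle V_i,V_j\rangle_FU_i^\dagger U_j\big)\Big\|_F^2-\frac{\kappa_2}{N}\sum_{j=1}^N\Big\|\frac1N\sum_{i=1}^N\big(\langle U_j,U_i\rangle_FV_j^\dagger V_i-\langle U_i,U_j\rangle_FV_i^\dagger V_j\big)\Big\|_F^2.$$ In particular $\mathcal E$ is non-increasing in time.
   Context: $\langle A,B\rangle_F=\mathrm{tr}(A^\dagger B)$ and $\|A\|_F=\sqrt{\langle A,A\rangle_F}$ for complex matrices; sums over $k$ run from $1$ to $N$. *)

theory Defs
  imports "HOL-Analysis.Analysis"
begin

text \<open>Complex matrices of size m x n are represented as complex^'n^'m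
  (rows indexed by 'm, columns by 'n); the sizes d1..d4 are the cardinalities
  of the (finite, nonempty) index types.\<close>

definition cadj :: "complex^'n^'m \<Rightarrow> complex^'m^'n" where
  "cadj A = (\<chi> i j. cnj (A $ j $ i))"

definition ctrace :: "complex^'n^'n \<Rightarrow> complex" where
  "ctrace A = (\<Sum>i\<in>UNIV. A $ i $ i)"

definition frob_inner :: "complex^'n^'m \<Rightarrow> complex^'n^'m \<Rightarrow> complex" where
  "frob_inner A B = ctrace (cadj A ** B)"

definition frob_norm :: "complex^'n^'m \<Rightarrow> real" where
  "frob_norm A = sqrt (Re (frob_inner A A))"

definition cscale :: "complex \<Rightarrow> complex^'n^'m \<Rightarrow> complex^'n^'m" where
  "cscale c A = (\<chi> i j. c * A $ i $ j)"

text \<open>Right-hand side of the U-equation for particle j, given a configuration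
  (U_k, V_k), k = 1..N (the V-equation is the same with U and V swapped).\<close>
definition field ::
  "real \<Rightarrow> real \<Rightarrow> nat \<Rightarrow> (nat \<Rightarrow> complex^'b^'a) \<Rightarrow> (nat \<Rightarrow> complex^'d^'c) \<Rightarrow> nat \<Rightarrow> complex^'b^'a" where
  "field k1 k2 N U V j =
     (k1 / real N) *\<^sub>R (\<Sum>k = 1..N.
        cscale (frob_inner (V j) (V k)) (U k ** cadj (U j) ** U j)
      - cscale (frob_inner (V k) (V j)) (U j ** cadj (U k) ** U j))
   + (k2 / real N) *\<^sub>R (\<Sum>k = 1..N.
        cscale (frob_inner (V j) (V k)) (U j ** cadj (U j) ** U k)
      - cscale (frob_inner (V k) (V j)) (U j ** cadj (U k) ** U j))"

definition energy :: "nat \<Rightarrow> (nat \<Rightarrow> complex^'b^'a) \<Rightarrow> (nat \<Rightarrow> complex^'d^'c) \<Rightarrow> complex" where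
  "energy N U V = 1 - (1 / (of_nat N)^2) *
     (\<Sum>i = 1..N. \<Sum>j = 1..N. frob_inner (U i) (U j) * frob_inner (V i) (V j))"

definition dissipation ::
  "real \<Rightarrow> real \<Rightarrow> nat \<Rightarrow> (nat \<Rightarrow> complex^'b^'a) \<Rightarrow> (nat \<Rightarrow> complex^'d^'c) \<Rightarrow> real" where
  "dissipation k1 k2 N U V =
     - (k1 / real N) * (\<Sum>j = 1..N. (frob_norm ((1 / real N) *\<^sub>R (\<Sum>i = 1..N.
          cscale (frob_inner (V j) (V i)) (U i ** cadj (U j))
        - cscale (frob_inner (V i) (V j)) (U j ** cadj (U i)))))^2)
     - (k1 / real N) * (\<Sum>j = 1..N. (frob_norm ((1 / real N) *\<^sub>R (\<Sum>i = 1..N.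
          cscale (frob_inner (U j) (U i)) (V i ** cadj (V j))
        - cscale (frob_inner (U i) (U j)) (V j ** cadj (V i)))))^2)
     - (k2 / real N) * (\<Sum>j = 1..N. (frob_norm ((1 / real N) *\<^sub>R (\<Sum>i = 1..N.
          cscale (frob_inner (V j) (V i)) (cadj (U j) ** U i)
        - cscale (frob_inner (V i) (V j)) (cadj (U i) ** U j))))^2)
     - (k2 / real N) * (\<Sum>j = 1..N. (frob_norm ((1 / real N) *\<^sub>R (\<Sum>i = 1..N.
          cscale (frob_inner (U j) (U i)) (cadj (V j) ** V i)
        - cscale (frob_inner (U i) (U j)) (cadj (V i) ** V j))))^2)"

end

theory Submission imports Defs begin

lemma frob_alt: "frob_inner A B = (\<Sum>i\<in>UNIV. \<Sum>k\<in>UNIV. cnj (A$i$k) * B$i$k)"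
  unfolding frob_inner_def ctrace_def cadj_def matrix_matrix_mult_def
  by simp (rule sum.swap)

lemma frob_bb: "bounded_bilinear (frob_inner :: complex^'n^'m \<Rightarrow> _ \<Rightarrow> _)"
proof
  fix a a' b b' :: "complex^'n^'m" and r :: real
  show "frob_inner (a + a') b = frob_inner a b + frob_inner a' b"
    by (simp add: frob_alt distrib_right sum.distrib)
  show "frob_inner a (b + b') = frob_inner a b + frob_inner a b'"
    by (simp add: frob_alt distrib_left sum.distrib)
  show "frob_inner (r *\<^sub>R a) b = r *\<^sub>R frob_inner a b"
    by (simp add: frob_alt scaleR_sum_right)
  show "frob_inner a (r *\<^sub>R b) = r *\<^sub>R frob_inner a b"
    by (simp add: frob_alt scaleR_sum_right)
next
  show "\<exists>K. \<forall>a b. norm (frob_inner (a::complex^'n^'m) b) \<le> norm a * norm b * K"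
  proof (intro exI allI)
    fix a b :: "complex^'n^'m"
    have "norm (frob_inner a b) \<le> (\<Sum>i\<in>UNIV. \<Sum>k\<in>UNIV. norm (cnj (a$i$k) * b$i$k))"
      unfolding frob_alt by (rule order_trans[OF norm_sum sum_mono]) (rule norm_sum)
    also have "\<dots> \<le> (\<Sum>i\<in>(UNIV::'m set). \<Sum>k\<in>(UNIV::'n set). norm a * norm b)"
    proof (intro sum_mono)
      fix i :: 'm and k :: 'n
      have "norm (a$i$k) \<le> norm (a$i)" by (rule Finite_Cartesian_Product.norm_nth_le)
      moreover have "norm (a$i) \<le> norm a" by (rule Finite_Cartesian_Product.norm_nth_le)
      ultimately have "norm (a$i$k) \<le> norm a" by linarith
      moreover have "norm (b$i$k) \<le> norm b" by (meson Finite_Cartesian_Product.norm_nth_le order.trans)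
      ultimately show "norm (cnj (a$i$k) * b$i$k) \<le> norm a * norm b"
        by (simp add: norm_mult mult_mono)
    qed
    also have "\<dots> = norm a * norm b * (real CARD('m) * real CARD('n))" by simp
    finally show "norm (frob_inner a b) \<le> norm a * norm b * (real CARD('m) * real CARD('n))" .
  qed
qed

lemmas fb = bounded_bilinear.add_left[OF frob_bb] bounded_bilinear.add_right[OF frob_bb]
  bounded_bilinear.diff_left[OF frob_bb] bounded_bilinear.diff_right[OF frob_bb]
  bounded_bilinear.sum_left[OF frob_bb] bounded_bilinear.sum_right[OF frob_bb]
  bounded_bilinear.scaleR_left[OF frob_bb] bounded_bilinear.scaleR_right[OF frob_bb]

lemma cadj_cadj[simp]: "cadj (cadj A) = A"
  by (simp add: cadj_def vec_eq_iff)

lemma cadj_mult: "cadj (A ** B) = cadj B ** cadj A"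
  by (simp add: cadj_def vec_eq_iff matrix_matrix_mult_def mult.commute)

lemma cadj_diff: "cadj (A - B) = cadj A - cadj B"
  by (simp add: cadj_def vec_eq_iff)

lemma cadj_sum: "cadj (\<Sum>i\<in>I. A i) = (\<Sum>i\<in>I. cadj (A i))"
  by (simp add: cadj_def vec_eq_iff sum_component)

lemma cadj_cscale: "cadj (cscale c A) = cscale (cnj c) (cadj A)"
  by (simp add: cadj_def cscale_def vec_eq_iff)

lemma cadj_scaleR: "cadj (r *\<^sub>R A) = r *\<^sub>R cadj A"
  by (simp add: cadj_def vec_eq_iff)

lemma frob_cnj: "cnj (frob_inner A B) = frob_inner B A"
  by (simp add: frob_alt mult.commute)

lemma frob_cadj: "frob_inner (cadj A) (cadj B) = frob_inner B A"
  unfolding frob_alt cadj_def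
  by (simp add: mult.commute) (rule sum.swap)

lemma frob_cscale_left: "frob_inner (cscale c A) B = cnj c * frob_inner A B"
  by (simp add: frob_alt cscale_def sum_distrib_left mult.assoc)

lemma frob_cscale_right: "frob_inner A (cscale c B) = c * frob_inner A B"
  by (simp add: frob_alt cscale_def sum_distrib_left algebra_simps)

lemma frob_mult_right: "frob_inner A (B ** C) = frob_inner (A ** cadj C) B"
  unfolding frob_alt cadj_def matrix_matrix_mult_def
  apply (simp add: sum_distrib_left sum_distrib_right)
  apply (rule sum.cong[OF refl])
  apply (subst sum.swap)
  apply (simp add: ac_simps)
  done
lemma sum_rot3: "(\<Sum>i\<in>A. \<Sum>j\<in>B. \<Sum>k\<in>C. f i j k) = (\<Sum>j\<in>B. \<Sum>k\<in>C. \<Sum>i\<in>A. f i j k)"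
proof -
  have "(\<Sum>i\<in>A. \<Sum>j\<in>B. \<Sum>k\<in>C. f i j k) = (\<Sum>j\<in>B. \<Sum>i\<in>A. \<Sum>k\<in>C. f i j k)"
    by (rule sum.swap)
  also have "\<dots> = (\<Sum>j\<in>B. \<Sum>k\<in>C. \<Sum>i\<in>A. f i j k)"
    by (rule sum.cong[OF refl], rule sum.swap)
  finally show ?thesis .
qed

lemma frob_mult_left: "frob_inner A (B ** C) = frob_inner (cadj B ** A) C"
  unfolding frob_alt cadj_def matrix_matrix_mult_def
  apply (simp add: sum_distrib_left sum_distrib_right)
  apply (rule trans[OF sum_rot3])
  apply (rule trans[OF sum.swap])
  apply (simp add: ac_simps)
  done
lemma mm_sum_left: "(\<Sum>i\<in>I. A i) ** B = (\<Sum>i\<in>I. A i ** B)"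
  unfolding vec_eq_iff matrix_matrix_mult_def 
  by (simp add: sum_distrib_right) (intro allI sum.swap)
lemma mm_sum_right: "B ** (\<Sum>i\<in>I. A i) = (\<Sum>i\<in>I. B ** A i)"
  unfolding vec_eq_iff matrix_matrix_mult_def 
  by (simp add: sum_distrib_left) (intro allI sum.swap)

lemma mm_diff_left: "(A - B) ** C = A ** C - B ** (C::complex^'k^'n)"
  unfolding vec_eq_iff matrix_matrix_mult_def
  by (simp add: left_diff_distrib sum_subtractf[where A=UNIV, symmetric])

lemma mm_diff_right: "(C::complex^'n^'m) ** (A - B) = C ** A - C ** B"
  unfolding vec_eq_iff matrix_matrix_mult_def
  by (simp add: right_diff_distrib sum_subtractf[where A=UNIV, symmetric])

lemma mm_cscale_left: "cscale c A ** B = cscale c (A ** B)"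
  by (simp add: vec_eq_iff matrix_matrix_mult_def cscale_def sum_distrib_left mult.assoc)

lemma mm_cscale_right: "A ** cscale c B = cscale c (A ** B)"
  by (simp add: vec_eq_iff matrix_matrix_mult_def cscale_def sum_distrib_left algebra_simps)

lemma cscale_diff: "cscale c (A - B) = cscale c A - cscale c B"
  by (simp add: vec_eq_iff cscale_def algebra_simps)

lemma frob_self_real: "frob_inner A A = complex_of_real (Re (frob_inner A A))"
  by (simp add: frob_alt complex_eq_iff Im_sum)

lemma frob_self_nonneg: "Re (frob_inner A A) \<ge> 0"
  by (simp add: frob_alt Re_sum sum_nonneg)

lemma frob_norm_scaleR_sq: "(frob_norm (r *\<^sub>R A))^2 = r^2 * Re (frob_inner A A)"
proof -
  have "frob_inner (r *\<^sub>R A) (r *\<^sub>R A) = (r^2) *\<^sub>R frob_inner A A"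
    by (simp add: fb power2_eq_square)
  then show ?thesis using frob_self_nonneg[of A]
    by (simp add: frob_norm_def)
qed

lemma antiherm: "frob_inner P (P - cadj P) + cnj (frob_inner P (P - cadj P))
   = frob_inner (P - cadj P) (P - cadj P)"
proof -
  have "frob_inner (cadj P) (cadj P) = frob_inner P P" by (simp add: frob_cadj)
  moreover have "cnj (frob_inner P (cadj P)) = frob_inner (cadj P) P" by (simp add: frob_cnj)
  moreover have "cnj (frob_inner P P) = frob_inner P P" by (simp add: frob_cnj)
  ultimately show ?thesis by (simp add: fb)
qed


definition dhalf :: "real \<Rightarrow> real \<Rightarrow> nat \<Rightarrow> (nat \<Rightarrow> complex^'b^'a) \<Rightarrow> (nat \<Rightarrow> complex^'d^'c) \<Rightarrow> real" where
  "dhalf k1 k2 N U V =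
     (k1 / real N) * (\<Sum>j = 1..N. (frob_norm ((1 / real N) *\<^sub>R (\<Sum>i = 1..N.
          cscale (frob_inner (V j) (V i)) (U i ** cadj (U j))
        - cscale (frob_inner (V i) (V j)) (U j ** cadj (U i)))))^2)
   + (k2 / real N) * (\<Sum>j = 1..N. (frob_norm ((1 / real N) *\<^sub>R (\<Sum>i = 1..N.
          cscale (frob_inner (V j) (V i)) (cadj (U j) ** U i)
        - cscale (frob_inner (V i) (V j)) (cadj (U i) ** U j))))^2)"

lemma dissipation_dhalf: "dissipation k1 k2 N U V = - dhalf k1 k2 N U V - dhalf k1 k2 N V U"
  unfolding dissipation_def dhalf_def by simp

lemma key:
  fixes X :: "nat \<Rightarrow> complex^'b^'a" and Y :: "nat \<Rightarrow> complex^'d^'c"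
  assumes N: "N \<ge> 1"
  shows "(\<Sum>i = 1..N. \<Sum>j = 1..N. (frob_inner (field k1 k2 N X Y i) (X j)
            + frob_inner (X i) (field k1 k2 N X Y j)) * frob_inner (Y i) (Y j))
         = complex_of_real ((real N)^2 * dhalf k1 k2 N X Y)"
proof -
  define a where "a j i = frob_inner (Y j) (Y i)" for j i
  define W where "W j = (\<Sum>i = 1..N. cscale (a j i) (X i))" for j
  define P where "P j = W j ** cadj (X j)" for j
  define Q where "Q j = cadj (X j) ** W j" for j
  define F where "F j = field k1 k2 N X Y j" for j
  have acnj: "cnj (a j i) = a i j" for i j by (simp add: a_def frob_cnj)
  have cW: "cadj (W j) = (\<Sum>i = 1..N. cscale (a i j) (cadj (X i)))" for j
    by (simp add: W_def cadj_sum cadj_cscale acnj)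
  have cP: "cadj (P j) = X j ** cadj (W j)" for j by (simp add: P_def cadj_mult)
  have cQ: "cadj (Q j) = cadj (W j) ** X j" for j by (simp add: Q_def cadj_mult)
  have h1: "P j ** X j = (\<Sum>k = 1..N. cscale (a j k) (X k ** cadj (X j) ** X j))" for j
    by (simp add: P_def W_def mm_sum_left mm_cscale_left)
  have h2: "cadj (P j) ** X j = (\<Sum>k = 1..N. cscale (a k j) (X j ** cadj (X k) ** X j))" for j
    by (simp add: cP cW mm_sum_left mm_sum_right mm_cscale_left mm_cscale_right)
  have h3: "X j ** Q j = (\<Sum>k = 1..N. cscale (a j k) (X j ** cadj (X j) ** X k))" for j
    by (simp add: Q_def W_def mm_sum_left mm_sum_right mm_cscale_left mm_cscale_right matrix_mul_assoc)
  have h4: "X j ** cadj (Q j) = (\<Sum>k = 1..N. cscale (a k j) (X j ** cadj (X k) ** X j))" for j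
    by (simp add: cQ cW mm_sum_left mm_sum_right mm_cscale_left mm_cscale_right matrix_mul_assoc)
  have Feq: "F j = (k1 / real N) *\<^sub>R ((P j - cadj (P j)) ** X j)
        + (k2 / real N) *\<^sub>R (X j ** (Q j - cadj (Q j)))" for j
    unfolding F_def field_def mm_diff_left mm_diff_right h1 h2 h3 h4
    by (simp add: a_def sum_subtractf)
  have step2: "(\<Sum>i = 1..N. \<Sum>j = 1..N. frob_inner (X i) (F j) * a i j)
      = (\<Sum>j = 1..N. frob_inner (W j) (F j))"
    unfolding W_def fb frob_cscale_left acnj
    by (subst sum.swap) (simp add: mult.commute)
  have step3: "(\<Sum>i = 1..N. \<Sum>j = 1..N. frob_inner (F i) (X j) * a i j)
      = cnj (\<Sum>i = 1..N. \<Sum>j = 1..N. frob_inner (X i) (F j) * a i j)"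
    by (simp add: frob_cnj acnj) (rule sum.swap)
  have step4: "frob_inner (W j) (F j) = complex_of_real (k1 / real N) * frob_inner (P j) (P j - cadj (P j))
      + complex_of_real (k2 / real N) * frob_inner (Q j) (Q j - cadj (Q j))" for j
  proof -
    have e1: "frob_inner (W j) ((P j - cadj (P j)) ** X j) = frob_inner (P j) (P j - cadj (P j))"
      by (simp only: frob_mult_right P_def)
    have e2: "frob_inner (W j) (X j ** (Q j - cadj (Q j))) = frob_inner (Q j) (Q j - cadj (Q j))"
      by (simp only: frob_mult_left Q_def)
    show ?thesis unfolding Feq fb e1 e2 by (simp add: scaleR_conv_of_real)
  qed
  have step5: "frob_inner (W j) (F j) + cnj (frob_inner (W j) (F j))
     = complex_of_real (k1 / real N) * frob_inner (P j - cadj (P j)) (P j - cadj (P j))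
     + complex_of_real (k2 / real N) * frob_inner (Q j - cadj (Q j)) (Q j - cadj (Q j))" for j
    unfolding step4 antiherm[symmetric] by (simp add: algebra_simps)
  have step6: "(\<Sum>i = 1..N. cscale (frob_inner (Y j) (Y i)) (X i ** cadj (X j))
        - cscale (frob_inner (Y i) (Y j)) (X j ** cadj (X i))) = P j - cadj (P j)" for j
  proof -
    have "P j = (\<Sum>i = 1..N. cscale (a j i) (X i ** cadj (X j)))"
      by (simp add: P_def W_def mm_sum_left mm_cscale_left)
    moreover have "cadj (P j) = (\<Sum>i = 1..N. cscale (a i j) (X j ** cadj (X i)))"
      by (simp add: cP cW mm_sum_right mm_cscale_right)
    ultimately show ?thesis by (simp add: sum_subtractf a_def)
  qed
  have step6b: "(\<Sum>i = 1..N. cscale (frob_inner (Y j) (Y i)) (cadj (X j) ** X i)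
        - cscale (frob_inner (Y i) (Y j)) (cadj (X i) ** X j)) = Q j - cadj (Q j)" for j
  proof -
    have "Q j = (\<Sum>i = 1..N. cscale (a j i) (cadj (X j) ** X i))"
      by (simp add: Q_def W_def mm_sum_right mm_cscale_right)
    moreover have "cadj (Q j) = (\<Sum>i = 1..N. cscale (a i j) (cadj (X i) ** X j))"
      by (simp add: cQ cW mm_sum_left mm_cscale_left)
    ultimately show ?thesis by (simp add: sum_subtractf a_def)
  qed
  have Npos: "real N > 0" using N by simp
  have dh: "(real N)^2 * dhalf k1 k2 N X Y = (\<Sum>j = 1..N. (k1 / real N) * Re (frob_inner (P j - cadj (P j)) (P j - cadj (P j)))
      + (k2 / real N) * Re (frob_inner (Q j - cadj (Q j)) (Q j - cadj (Q j))))"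
  proof -
    define m where "m j = Re (frob_inner (P j - cadj (P j)) (P j - cadj (P j)))" for j
    define q where "q j = Re (frob_inner (Q j - cadj (Q j)) (Q j - cadj (Q j)))" for j
    have "dhalf k1 k2 N X Y = (k1 / real N) * (\<Sum>j = 1..N. (1 / real N)^2 * m j)
        + (k2 / real N) * (\<Sum>j = 1..N. (1 / real N)^2 * q j)"
      unfolding dhalf_def step6 step6b frob_norm_scaleR_sq m_def q_def ..
    also have "\<dots> = (k1 / real N) * ((1 / real N)^2 * (\<Sum>j = 1..N. m j))
        + (k2 / real N) * ((1 / real N)^2 * (\<Sum>j = 1..N. q j))"
      by (simp only: sum_distrib_left)
    finally have d1: "dhalf k1 k2 N X Y = \<dots>" .
    have d2: "(\<Sum>j = 1..N. (k1 / real N) * m j + (k2 / real N) * q j)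
        = (k1 / real N) * (\<Sum>j = 1..N. m j) + (k2 / real N) * (\<Sum>j = 1..N. q j)"
      by (simp only: sum.distrib sum_distrib_left)
    show ?thesis unfolding m_def[symmetric] q_def[symmetric] d2 d1
      using Npos by (simp add: field_simps power2_eq_square)
  qed
  have "(\<Sum>i = 1..N. \<Sum>j = 1..N. (frob_inner (F i) (X j) + frob_inner (X i) (F j)) * a i j)
     = (\<Sum>i = 1..N. \<Sum>j = 1..N. frob_inner (F i) (X j) * a i j) + (\<Sum>i = 1..N. \<Sum>j = 1..N. frob_inner (X i) (F j) * a i j)"
    by (simp add: distrib_right sum.distrib)
  also have "\<dots> = (\<Sum>j = 1..N. frob_inner (W j) (F j) + cnj (frob_inner (W j) (F j)))"
    unfolding step3 step2 by (simp add: sum.distrib)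
  also have "\<dots> = complex_of_real ((real N)^2 * dhalf k1 k2 N X Y)"
    unfolding step5 dh
    by (simp add: frob_self_real[symmetric])
  finally show ?thesis by (simp add: F_def a_def)
qed


lemma dhalf_nonneg: "k1 \<ge> 0 \<Longrightarrow> k2 \<ge> 0 \<Longrightarrow> dhalf k1 k2 N U V \<ge> 0"
  unfolding dhalf_def by (intro add_nonneg_nonneg mult_nonneg_nonneg sum_nonneg) auto

theorem lemma3p1:
  fixes N :: nat and k1 k2 :: real and T :: "real set"
    and U :: "nat \<Rightarrow> real \<Rightarrow> complex^'d2^'d1"
    and V :: "nat \<Rightarrow> real \<Rightarrow> complex^'d4^'d3"
  assumes "N \<ge> 1" and "k1 \<ge> 0" and "k2 \<ge> 0"
    and "is_interval T"
    and solU: "\<And>j t. j \<in> {1..N} \<Longrightarrow> t \<in> T \<Longrightarrow>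
       ((\<lambda>s. U j s) has_vector_derivative
          field k1 k2 N (\<lambda>k. U k t) (\<lambda>k. V k t) j) (at t within T)"
    and solV: "\<And>j t. j \<in> {1..N} \<Longrightarrow> t \<in> T \<Longrightarrow>
       ((\<lambda>s. V j s) has_vector_derivative
          field k1 k2 N (\<lambda>k. V k t) (\<lambda>k. U k t) j) (at t within T)"
  shows "(\<forall>t\<in>T. ((\<lambda>s. energy N (\<lambda>k. U k s) (\<lambda>k. V k s)) has_vector_derivative
              complex_of_real (dissipation k1 k2 N (\<lambda>k. U k t) (\<lambda>k. V k t))) (at t within T))
       \<and> (\<forall>t\<in>T. energy N (\<lambda>k. U k t) (\<lambda>k. V k t) \<in> \<real>)
       \<and> (\<forall>s\<in>T. \<forall>t\<in>T. s \<le> t \<longrightarrow>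
            Re (energy N (\<lambda>k. U k t) (\<lambda>k. V k t)) \<le> Re (energy N (\<lambda>k. U k s) (\<lambda>k. V k s)))"
proof -
  have Npos: "real N > 0" using assms(1) by simp
  define E where "E s = energy N (\<lambda>k. U k s) (\<lambda>k. V k s)" for s
  define D where "D t = dissipation k1 k2 N (\<lambda>k. U k t) (\<lambda>k. V k t)" for t
  have deriv: "((\<lambda>s. E s) has_vector_derivative complex_of_real (D t)) (at t within T)" if t: "t \<in> T" for t
  proof -
    define U' where "U' j = field k1 k2 N (\<lambda>k. U k t) (\<lambda>k. V k t) j" for j
    define V' where "V' j = field k1 k2 N (\<lambda>k. V k t) (\<lambda>k. U k t) j" for j
    have dprod: "((\<lambda>s. frob_inner (U i s) (U j s) * frob_inner (V i s) (V j s)) has_vector_derivative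
        (frob_inner (U i t) (U j t) * (frob_inner (V i t) (V' j) + frob_inner (V' i) (V j t))
         + (frob_inner (U i t) (U' j) + frob_inner (U' i) (U j t)) * frob_inner (V i t) (V j t))) (at t within T)"
      if "i \<in> {1..N}" "j \<in> {1..N}" for i j
      unfolding U'_def V'_def
      by (intro has_vector_derivative_mult bounded_bilinear.has_vector_derivative[OF frob_bb]
           solU solV that t)
    have dsum: "((\<lambda>s. \<Sum>i = 1..N. \<Sum>j = 1..N. frob_inner (U i s) (U j s) * frob_inner (V i s) (V j s)) has_vector_derivative
        (\<Sum>i = 1..N. \<Sum>j = 1..N. (frob_inner (U i t) (U j t) * (frob_inner (V i t) (V' j) + frob_inner (V' i) (V j t))
         + (frob_inner (U i t) (U' j) + frob_inner (U' i) (U j t)) * frob_inner (V i t) (V j t)))) (at t within T)"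
      by (intro has_vector_derivative_sum dprod)
    have dE: "((\<lambda>s. E s) has_vector_derivative (0 - (1 / (of_nat N)^2) *
        (\<Sum>i = 1..N. \<Sum>j = 1..N. (frob_inner (U i t) (U j t) * (frob_inner (V i t) (V' j) + frob_inner (V' i) (V j t))
         + (frob_inner (U i t) (U' j) + frob_inner (U' i) (U j t)) * frob_inner (V i t) (V j t))))) (at t within T)"
      unfolding E_def energy_def
      by (intro has_vector_derivative_diff has_vector_derivative_const has_vector_derivative_mult_right dsum)
    have kU: "(\<Sum>i = 1..N. \<Sum>j = 1..N. (frob_inner (U' i) (U j t) + frob_inner (U i t) (U' j)) * frob_inner (V i t) (V j t))
        = complex_of_real ((real N)^2 * dhalf k1 k2 N (\<lambda>k. U k t) (\<lambda>k. V k t))"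
      unfolding U'_def by (rule key[OF assms(1)])
    have kV: "(\<Sum>i = 1..N. \<Sum>j = 1..N. (frob_inner (V' i) (V j t) + frob_inner (V i t) (V' j)) * frob_inner (U i t) (U j t))
        = complex_of_real ((real N)^2 * dhalf k1 k2 N (\<lambda>k. V k t) (\<lambda>k. U k t))"
      unfolding V'_def by (rule key[OF assms(1)])
    have "(\<Sum>i = 1..N. \<Sum>j = 1..N. (frob_inner (U i t) (U j t) * (frob_inner (V i t) (V' j) + frob_inner (V' i) (V j t))
         + (frob_inner (U i t) (U' j) + frob_inner (U' i) (U j t)) * frob_inner (V i t) (V j t)))
       = (\<Sum>i = 1..N. \<Sum>j = 1..N. (frob_inner (V' i) (V j t) + frob_inner (V i t) (V' j)) * frob_inner (U i t) (U j t))
       + (\<Sum>i = 1..N. \<Sum>j = 1..N. (frob_inner (U' i) (U j t) + frob_inner (U i t) (U' j)) * frob_inner (V i t) (V j t))"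
      by (simp add: sum.distrib[symmetric] algebra_simps)
    also have "\<dots> = complex_of_real ((real N)^2 * (dhalf k1 k2 N (\<lambda>k. V k t) (\<lambda>k. U k t) + dhalf k1 k2 N (\<lambda>k. U k t) (\<lambda>k. V k t)))"
      unfolding kU kV by (simp add: algebra_simps)
    finally have eq: "0 - (1 / (of_nat N)^2) *
        (\<Sum>i = 1..N. \<Sum>j = 1..N. (frob_inner (U i t) (U j t) * (frob_inner (V i t) (V' j) + frob_inner (V' i) (V j t))
         + (frob_inner (U i t) (U' j) + frob_inner (U' i) (U j t)) * frob_inner (V i t) (V j t)))
       = complex_of_real (D t)"
      using Npos by (simp add: D_def dissipation_dhalf field_simps)
    show ?thesis using dE unfolding eq .
  qed
  have real: "E t \<in> \<real>" for t
  proof -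
    have "cnj (\<Sum>i = 1..N. \<Sum>j = 1..N. frob_inner (U i t) (U j t) * frob_inner (V i t) (V j t))
        = (\<Sum>i = 1..N. \<Sum>j = 1..N. frob_inner (U i t) (U j t) * frob_inner (V i t) (V j t))"
      by (simp add: frob_cnj) (rule sum.swap)
    then show ?thesis unfolding E_def energy_def Reals_cnj_iff by simp
  qed
  have Dnonpos: "D t \<le> 0" for t
    unfolding D_def dissipation_dhalf using dhalf_nonneg[OF assms(2,3)]
    by (smt (verit, best))
  have mono: "Re (E b) \<le> Re (E a)" if ab: "a \<in> T" "b \<in> T" "a \<le> b" for a b
  proof -
    have iv: "\<forall>a\<in>T. \<forall>b\<in>T. \<forall>x. a \<le> x \<and> x \<le> b \<longrightarrow> x \<in> T"
      using assms(4) is_interval_1 by blast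
    have sub: "{a..b} \<subseteq> T"
    proof
      fix x assume "x \<in> {a..b}"
      then have "a \<le> x" "x \<le> b" by auto
      then show "x \<in> T" using iv ab(1,2) by blast
    qed
    have hd: "((\<lambda>s. Re (E s)) has_derivative (\<lambda>h. h *\<^sub>R D x)) (at x within {a..b})"
      if "a \<le> x" "x \<le> b" for x
    proof -
      have "x \<in> T" using sub that by auto
      from has_vector_derivative_within_subset[OF deriv[OF this] sub]
      have "((\<lambda>s. Re (E s)) has_vector_derivative Re (complex_of_real (D x))) (at x within {a..b})"
        by (rule bounded_linear.has_vector_derivative[OF bounded_linear_Re])
      then show ?thesis unfolding has_vector_derivative_def Re_complex_of_real .
    qed
    have "\<exists>x\<in>{a..b}. Re (E b) - Re (E a) = (\<lambda>h. h *\<^sub>R D x) (b - a)"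
      by (rule mvt_very_simple[of a b "\<lambda>s. Re (E s)" "\<lambda>x h. h *\<^sub>R D x", OF ab(3) hd])
    then obtain x where eq: "Re (E b) - Re (E a) = (b - a) * D x" by auto
    have "(b - a) * D x \<le> 0" using ab(3) Dnonpos[of x] by (simp add: mult_nonneg_nonpos)
    with eq show ?thesis by linarith
  qed
  show ?thesis
    using deriv real mono unfolding E_def D_def by blast
qed

end
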